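(* Let $K_t(\omega)$ be a weighted complete graph on $[t]$. Suppose $K_t(\omega)$ contains $\ell_1$ copies of $C_8$, $\ell_2$ copies of $K_5$, $\ell_3$ copies of $C_5$, $\ell_4$ copies of $K_4$, $\ell_5$ copies of $C_4$, $\ell_6$ copies of $K_3$ and $\ell_7$ single edges, such that all these subgraphs are pairwise vertex-disjoint and each of them is half (every edge of each of these subgraphs has weight $\frac12$). Then $$2g(K_t(\omega))\le 1-\frac{30}{30t-120\ell_1-100\ell_2-75\ell_3-72\ell_4-60\ell_5-45\ell_6-20\ell_7}.$$
   Context: A weighted complete graph $K_t(\omega)$ is the complete graph on vertex set $[t]$ in which every edge $ij$ has a weight $\omega(i,j)\in\{\frac12,1\}$; an edge is called half if its weight is $\frac12$ and full if its weight is $1$, and a subgraph is half if all its edges are half. Its edge density is $g(K_t(\omega))=\max_{\mathbf u}\sum_{1\le i<j\le t}\omega(i,j)u_iu_j$, the maximum taken over all $\mathbf u=(u_1,\dots,u_t)$ with $u_i\ge 0$ and $\sum_i u_i=1$. *)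

theory Defs
  imports Complex_Main
begin

definition weighted_complete :: "nat \<Rightarrow> (nat \<Rightarrow> nat \<Rightarrow> real) \<Rightarrow> bool" where
  "weighted_complete t \<omega> \<longleftrightarrow>
     (\<forall>i\<in>{1..t}. \<forall>j\<in>{1..t}. i \<noteq> j \<longrightarrow> \<omega> i j \<in> {1/2, 1} \<and> \<omega> i j = \<omega> j i)"

definition half_edge :: "(nat \<Rightarrow> nat \<Rightarrow> real) \<Rightarrow> nat \<Rightarrow> nat \<Rightarrow> bool" where
  "half_edge \<omega> i j \<longleftrightarrow> \<omega> i j = 1/2"

definition simplex :: "nat \<Rightarrow> (nat \<Rightarrow> real) set" where
  "simplex t = {u. (\<forall>i\<in>{1..t}. 0 \<le> u i) \<and> (\<Sum>i\<in>{1..t}. u i) = 1}"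

definition edge_poly :: "nat \<Rightarrow> (nat \<Rightarrow> nat \<Rightarrow> real) \<Rightarrow> (nat \<Rightarrow> real) \<Rightarrow> real" where
  "edge_poly t \<omega> u = (\<Sum>i\<in>{1..t}. \<Sum>j\<in>{i+1..t}. \<omega> i j * u i * u j)"

text \<open>Edge density g(K_t(\<omega>)): the maximum (attained, the simplex being compact) of the edge polynomial.\<close>
definition edge_density :: "nat \<Rightarrow> (nat \<Rightarrow> nat \<Rightarrow> real) \<Rightarrow> real" where
  "edge_density t \<omega> = Sup (edge_poly t \<omega> ` simplex t)"

definition half_cycle :: "nat \<Rightarrow> (nat \<Rightarrow> nat \<Rightarrow> real) \<Rightarrow> nat \<Rightarrow> nat list \<Rightarrow> bool" where
  "half_cycle t \<omega> k vs \<longleftrightarrow> length vs = k \<and> distinct vs \<and> set vs \<subseteq> {1..t} \<and>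
     (\<forall>i<k. half_edge \<omega> (vs ! i) (vs ! ((i + 1) mod k)))"

definition half_clique :: "nat \<Rightarrow> (nat \<Rightarrow> nat \<Rightarrow> real) \<Rightarrow> nat \<Rightarrow> nat set \<Rightarrow> bool" where
  "half_clique t \<omega> k S \<longleftrightarrow> card S = k \<and> S \<subseteq> {1..t} \<and>
     (\<forall>i\<in>S. \<forall>j\<in>S. i \<noteq> j \<longrightarrow> half_edge \<omega> i j)"

end

theory Submission imports Defs begin

lemma wcs:
  fixes s w :: "'i \<Rightarrow> real"
  assumes fin: "finite I" and wn: "\<forall>i\<in>I. 0 \<le> w i" and wz: "\<forall>i\<in>I. w i = 0 \<longrightarrow> s i = 0"
  shows "(\<Sum>i\<in>I. s i)^2 / (\<Sum>i\<in>I. w i) \<le> (\<Sum>i\<in>I. (s i)^2 / w i)"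
proof -
  define S where "S = (\<Sum>i\<in>I. s i)"
  define W where "W = (\<Sum>i\<in>I. w i)"
  have R0: "0 \<le> (\<Sum>i\<in>I. (s i)^2 / w i)"
    by (rule sum_nonneg) (use wn in auto)
  show ?thesis
  proof (cases "W = 0")
    case True
    then show ?thesis using R0 by (simp add: W_def)
  next
    case False
    have W0: "W > 0" using False wn unfolding W_def by (simp add: order_less_le sum_nonneg)
    define l where "l = S / W"
    have each: "2*l*s i - l^2 * w i \<le> (s i)^2 / w i" if "i \<in> I" for i
    proof (cases "w i = 0")
      case True then show ?thesis using wz that by simp
    next
      case False
      then have wp: "w i > 0" using wn that by (simp add: order_less_le)
      have "0 \<le> (s i - l * w i)^2 / w i" using wp by simp
      also have "(s i - l * w i)^2 / w i = (s i)^2 / w i - (2*l*s i - l^2 * w i)"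
        using wp by (simp add: field_simps power2_eq_square)
      finally show ?thesis by simp
    qed
    have "(\<Sum>i\<in>I. 2*l*s i - l^2 * w i) \<le> (\<Sum>i\<in>I. (s i)^2 / w i)"
      by (rule sum_mono) (use each in auto)
    moreover have "(\<Sum>i\<in>I. 2*l*s i - l^2 * w i) = 2*l*S - l^2*W"
      by (simp add: S_def W_def sum_subtractf sum_distrib_left)
    moreover have "2*l*S - l^2*W = S^2/W" using W0 by (simp add: l_def field_simps power2_eq_square)
    ultimately show ?thesis by (simp add: S_def W_def)
  qed
qed

lemma cs1:
  fixes x :: "'i \<Rightarrow> real"
  assumes "finite I"
  shows "(\<Sum>i\<in>I. x i)^2 / real (card I) \<le> (\<Sum>i\<in>I. (x i)^2)"
  using wcs[of I "\<lambda>_. 1" x] assms by simp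


lemma clique_bound:
  fixes M :: "nat \<Rightarrow> nat \<Rightarrow> real" and u :: "nat \<Rightarrow> real"
  assumes fin: "finite S" and ck: "card S = k" and k1: "k \<ge> 1"
    and d: "\<forall>a\<in>S. M a a = 1" and h: "\<forall>a\<in>S. \<forall>b\<in>S. a \<noteq> b \<longrightarrow> M a b = 1/2"
  shows "(\<Sum>a\<in>S. u a)^2 / (2*real k/(real k+1)) \<le> (\<Sum>a\<in>S. \<Sum>b\<in>S. M a b * u a * u b)"
proof -
  have row: "(\<Sum>b\<in>S. M a b * u a * u b) = (\<Sum>b\<in>S. 1/2 * u a * u b) + 1/2 * (u a)^2" if a: "a \<in> S" for a
  proof -
    have "(\<Sum>b\<in>S. M a b * u a * u b) = (\<Sum>b\<in>S. 1/2 * u a * u b + (if a = b then 1/2 * (u a)^2 else 0))"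
      by (rule sum.cong) (use d h a in \<open>auto simp: power2_eq_square\<close>)
    also have "\<dots> = (\<Sum>b\<in>S. 1/2 * u a * u b) + 1/2 * (u a)^2"
      using fin a by (simp add: sum.distrib)
    finally show ?thesis .
  qed
  have "(\<Sum>a\<in>S. \<Sum>b\<in>S. M a b * u a * u b) = (\<Sum>a\<in>S. \<Sum>b\<in>S. 1/2 * u a * u b) + 1/2 * (\<Sum>a\<in>S. (u a)^2)"
    using row by (simp add: sum.distrib sum_distrib_left)
  also have "(\<Sum>a\<in>S. \<Sum>b\<in>S. 1/2 * u a * u b) = 1/2 * (\<Sum>a\<in>S. u a)^2"
  proof -
    have "(\<Sum>a\<in>S. \<Sum>b\<in>S. 1/2 * u a * u b) = 1/2 * (\<Sum>a\<in>S. u a * (\<Sum>b\<in>S. u b))"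
      by (simp add: sum_distrib_left mult.assoc)
    also have "(\<Sum>a\<in>S. u a * (\<Sum>b\<in>S. u b)) = (\<Sum>a\<in>S. u a)^2"
      by (simp add: sum_distrib_right power2_eq_square)
    finally show ?thesis .
  qed
  finally have E: "(\<Sum>a\<in>S. \<Sum>b\<in>S. M a b * u a * u b) = 1/2 * (\<Sum>a\<in>S. u a)^2 + 1/2 * (\<Sum>a\<in>S. (u a)^2)" .
  have C: "(\<Sum>a\<in>S. u a)^2 / real k \<le> (\<Sum>a\<in>S. (u a)^2)" using cs1[OF fin, of u] ck by simp
  have kp: "real k > 0" using k1 by simp
  have "(\<Sum>a\<in>S. u a)^2 / (2*real k/(real k+1)) = 1/2 * (\<Sum>a\<in>S. u a)^2 + 1/2 * ((\<Sum>a\<in>S. u a)^2 / real k)"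
    using kp by (simp add: field_simps)
  also have "\<dots> \<le> 1/2 * (\<Sum>a\<in>S. u a)^2 + 1/2 * (\<Sum>a\<in>S. (u a)^2)" using C by simp
  finally show ?thesis using E by simp
qed

lemma rot:
  fixes k :: nat
  assumes "0 < k"
  shows "(\<Sum>m<k. h ((m+1) mod k)) = (\<Sum>m<k. (h m :: real))"
proof -
  obtain n where k: "k = Suc n" using assms by (cases k) auto
  have "(\<Sum>m<Suc n. h ((m+1) mod Suc n)) = (\<Sum>m<n. h ((m+1) mod Suc n)) + h 0"
    by simp
  also have "(\<Sum>m<n. h ((m+1) mod Suc n)) = (\<Sum>m<n. h (Suc m))"
    by (rule sum.cong) auto
  also have "(\<Sum>m<n. h (Suc m)) + h 0 = (\<Sum>m<Suc n. h m)"
    using sum.lessThan_Suc_shift[of h n] by linarith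
  finally show ?thesis using k by simp
qed

lemma cycle_bound:
  fixes M :: "nat \<Rightarrow> nat \<Rightarrow> real" and u :: "nat \<Rightarrow> real" and vs :: "nat list"
  assumes dist: "distinct vs" and len: "length vs = k" and k3: "k \<ge> 3"
    and d: "\<forall>a\<in>set vs. M a a = 1"
    and sym: "\<forall>a\<in>set vs. \<forall>b\<in>set vs. M a b = M b a"
    and h: "\<forall>m<k. M (vs!m) (vs!((m+1) mod k)) = 1/2"
    and nn: "\<forall>a\<in>set vs. \<forall>b\<in>set vs. 0 \<le> M a b * u a * u b"
  shows "(\<Sum>a\<in>set vs. u a)^2 / (real k / 2) \<le> (\<Sum>a\<in>set vs. \<Sum>b\<in>set vs. M a b * u a * u b)"
proof -
  have bij: "bij_betw ((!) vs) {..<k} (set vs)" using bij_betw_nth[OF dist] len by simp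
  have reidx: "\<And>f. (\<Sum>a\<in>set vs. f a) = (\<Sum>m<k. f (vs!m))"
    using sum.reindex_bij_betw[OF bij] by metis
  define x where "x m = u (vs!m)" for m
  define G where "G m m' = M (vs!m) (vs!m') * x m * x m'" for m m'
  define sc where "sc m = (m+1) mod k" for m
  define pr where "pr m = (if m = 0 then k - 1 else m - 1)" for m
  have kp: "0 < k" using k3 by simp
  have inset: "vs!m \<in> set vs" if "m < k" for m using that len by simp
  have scl: "sc m < k" for m using kp by (simp add: sc_def)
  have prl: "pr m < k" if "m < k" for m using kp that by (auto simp: pr_def)
  have scpr: "sc (pr m) = m" if "m < k" for m
  proof (cases "m = 0")
    case True
    then have "pr m = k - 1" by (simp add: pr_def)
    moreover have "k - 1 + 1 = k" using kp by simp
    ultimately show ?thesis using True by (simp add: sc_def)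
  next
    case False
    then have "pr m = m - 1" by (simp add: pr_def)
    moreover have "m - 1 + 1 = m" using False by simp
    ultimately show ?thesis using that by (simp add: sc_def)
  qed
  have prsc: "pr (sc m) = m" if "m < k" for m
  proof (cases "m + 1 = k")
    case True
    then have "sc m = 0" by (simp add: sc_def)
    then show ?thesis using True by (simp add: pr_def)
  next
    case False
    then have "sc m = m + 1" using that by (simp add: sc_def)
    then show ?thesis by (simp add: pr_def)
  qed
  have dst: "m \<noteq> sc m \<and> m \<noteq> pr m \<and> sc m \<noteq> pr m" if "m < k" for m
  proof -
    have a: "m \<noteq> sc m"
    proof (cases "m + 1 = k")
      case True
      then have "sc m = 0" by (simp add: sc_def)
      then show ?thesis using True k3 by simp
    next
      case False then show ?thesis using that by (simp add: sc_def)
    qed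
    have b: "m \<noteq> pr m" using a scpr[OF that] by metis
    have c: "sc m \<noteq> pr m"
    proof
      assume e: "sc m = pr m"
      then have "sc (sc m) = m" using scpr[OF that] by simp
      moreover have "sc (sc m) \<noteq> m"
      proof (cases "m + 2 < k")
        case True then show ?thesis by (simp add: sc_def)
      next
        case False
        then have "m + 1 = k \<or> m + 2 = k" using that by linarith
        then show ?thesis
        proof
          assume m: "m + 1 = k"
          then have "sc m = 0" by (simp add: sc_def)
          moreover have "sc 0 = 1" using k3 by (simp add: sc_def)
          ultimately show ?thesis using m k3 by simp
        next
          assume m: "m + 2 = k"
          then have "sc m = m + 1" by (simp add: sc_def)
          moreover have "sc (m + 1) = 0" using m by (simp add: sc_def)
          ultimately show ?thesis using m k3 by simp
        qed
      qed
      ultimately show False by simp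
    qed
    show ?thesis using a b c by simp
  qed
  have Gnn: "0 \<le> G m m'" if "m < k" "m' < k" for m m'
    using nn inset[OF that(1)] inset[OF that(2)] by (simp add: G_def x_def)
  have row: "(\<Sum>m'<k. G m m') \<ge> (x m)^2 + 1/2 * (x m * x (sc m)) + 1/2 * (x m * x (pr m))"
    if m: "m < k" for m
  proof -
    have sub: "{m, sc m, pr m} \<subseteq> {..<k}" using m scl prl[OF m] by auto
    have "(\<Sum>m'\<in>{m, sc m, pr m}. G m m') \<le> (\<Sum>m'<k. G m m')"
      by (rule sum_mono2) (use sub Gnn m in auto)
    moreover have "(\<Sum>m'\<in>{m, sc m, pr m}. G m m') = G m m + G m (sc m) + G m (pr m)"
      using dst[OF m] by simp
    moreover have "G m m = (x m)^2" using d inset[OF m] by (simp add: G_def power2_eq_square)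
    moreover have "G m (sc m) = 1/2 * (x m * x (sc m))" using h m by (simp add: G_def sc_def)
    moreover have "G m (pr m) = 1/2 * (x m * x (pr m))"
    proof -
      have "M (vs ! pr m) (vs ! sc (pr m)) = 1/2" using h prl[OF m] by (simp add: sc_def)
      then have "M (vs ! pr m) (vs ! m) = 1/2" using scpr[OF m] by simp
      then have "M (vs ! m) (vs ! pr m) = 1/2" using sym inset[OF m] inset[OF prl[OF m]] by metis
      then show ?thesis by (simp add: G_def)
    qed
    ultimately show ?thesis by linarith
  qed
  have "(\<Sum>a\<in>set vs. \<Sum>b\<in>set vs. M a b * u a * u b) = (\<Sum>m<k. \<Sum>m'<k. G m m')"
    by (simp add: reidx G_def x_def)
  also have "\<dots> \<ge> (\<Sum>m<k. (x m)^2 + 1/2 * (x m * x (sc m)) + 1/2 * (x m * x (pr m)))"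
    by (rule sum_mono) (use row in auto)
  finally have L1: "(\<Sum>a\<in>set vs. \<Sum>b\<in>set vs. M a b * u a * u b) \<ge>
      (\<Sum>m<k. (x m)^2) + 1/2 * (\<Sum>m<k. x m * x (sc m)) + 1/2 * (\<Sum>m<k. x m * x (pr m))"
    by (simp add: sum.distrib sum_distrib_left)
  have R1: "(\<Sum>m<k. x m * x (pr m)) = (\<Sum>m<k. x m * x (sc m))"
  proof -
    have "(\<Sum>m<k. x m * x (pr m)) = (\<Sum>m<k. x (sc m) * x (pr (sc m)))"
      using rot[OF kp, of "\<lambda>m. x m * x (pr m)"] by (simp add: sc_def)
    also have "\<dots> = (\<Sum>m<k. x m * x (sc m))"
      by (rule sum.cong) (auto simp: prsc)
    finally show ?thesis .
  qed
  define T where "T = (\<Sum>m<k. (x m)^2) + (\<Sum>m<k. x m * x (sc m))"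
  have L2: "(\<Sum>a\<in>set vs. \<Sum>b\<in>set vs. M a b * u a * u b) \<ge> T" using L1 R1 by (simp add: T_def)
  have R2: "(\<Sum>m<k. (x (sc m))^2) = (\<Sum>m<k. (x m)^2)"
    using rot[OF kp, of "\<lambda>m. (x m)^2"] by (simp add: sc_def)
  have R3: "(\<Sum>m<k. x (sc m)) = (\<Sum>m<k. x m)"
    using rot[OF kp, of "\<lambda>m. x m"] by (simp add: sc_def)
  have Y: "(\<Sum>m<k. (x m + x (sc m))^2) = 2 * T"
    using R2 by (simp add: power2_sum sum.distrib T_def sum_distrib_left mult.assoc)
  have C: "(\<Sum>m<k. x m + x (sc m))^2 / real k \<le> (\<Sum>m<k. (x m + x (sc m))^2)"
    using cs1[of "{..<k}" "\<lambda>m. x m + x (sc m)"] by simp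
  have S: "(\<Sum>m<k. x m + x (sc m)) = 2 * (\<Sum>a\<in>set vs. u a)"
    using R3 by (simp add: sum.distrib reidx x_def)
  have "(\<Sum>a\<in>set vs. u a)^2 / (real k / 2) = (2 * (\<Sum>a\<in>set vs. u a))^2 / real k / 2"
    by (simp add: field_simps power2_eq_square)
  also have "\<dots> \<le> T" using C S Y by simp
  finally show ?thesis using L2 by simp
qed


lemma block_main:
  fixes A :: "nat set" and B :: "nat \<Rightarrow> nat set" and w :: "nat \<Rightarrow> real"
    and M :: "nat \<Rightarrow> nat \<Rightarrow> real" and u :: "nat \<Rightarrow> real"
  assumes finA: "finite A"
    and sub: "\<forall>i<n. B i \<subseteq> A"
    and disj: "\<forall>i<n. \<forall>j<n. i \<noteq> j \<longrightarrow> B i \<inter> B j = {}"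
    and wp: "\<forall>i<n. w i > 0"
    and bnd: "\<forall>i<n. (\<Sum>a\<in>B i. u a)^2 / w i \<le> (\<Sum>a\<in>B i. \<Sum>b\<in>B i. M a b * u a * u b)"
    and nn: "\<forall>a\<in>A. \<forall>b\<in>A. 0 \<le> M a b * u a * u b"
    and d: "\<forall>a\<in>A. M a a = 1"
    and s1: "(\<Sum>a\<in>A. u a) = 1"
  shows "1 / ((\<Sum>i<n. w i) + real (card (A - (\<Union>i<n. B i)))) \<le> (\<Sum>a\<in>A. \<Sum>b\<in>A. M a b * u a * u b)"
proof -
  define U where "U = (\<Union>i<n. B i)"
  define R where "R = A - U"
  define F where "F a = (\<Sum>b\<in>A. M a b * u a * u b)" for a
  have UA: "U \<subseteq> A" using sub by (auto simp: U_def)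
  have finU: "finite U" using UA finA finite_subset by blast
  have finB: "\<forall>i\<in>{..<n}. finite (B i)" using sub finA finite_subset by blast
  have disj': "\<forall>i\<in>{..<n}. \<forall>j\<in>{..<n}. i \<noteq> j \<longrightarrow> B i \<inter> B j = {}" using disj by auto
  have finR: "finite R" using finA by (simp add: R_def)
  have split: "(\<Sum>a\<in>A. g a) = (\<Sum>a\<in>R. g a) + (\<Sum>a\<in>U. g a)" for g :: "nat \<Rightarrow> real"
    unfolding R_def by (rule sum.subset_diff[OF UA finA])
  have Uspl: "(\<Sum>a\<in>U. g a) = (\<Sum>i<n. \<Sum>a\<in>B i. g a)" for g :: "nat \<Rightarrow> real"
    unfolding U_def by (rule sum.UNION_disjoint[OF _ finB disj']) simp
  have Fn: "0 \<le> M a b * u a * u b" if "a \<in> A" "b \<in> A" for a b using nn that by blast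
  have blk: "(\<Sum>a\<in>B i. u a)^2 / w i \<le> (\<Sum>a\<in>B i. F a)" if i: "i < n" for i
  proof -
    have "(\<Sum>a\<in>B i. \<Sum>b\<in>B i. M a b * u a * u b) \<le> (\<Sum>a\<in>B i. F a)"
      unfolding F_def
    proof (rule sum_mono)
      fix a assume a: "a \<in> B i"
      show "(\<Sum>b\<in>B i. M a b * u a * u b) \<le> (\<Sum>b\<in>A. M a b * u a * u b)"
        by (rule sum_mono2[OF finA]) (use sub i a Fn in auto)
    qed
    then show ?thesis using bnd i by (meson order_trans)
  qed
  have rst: "(\<Sum>a\<in>R. u a)^2 / real (card R) \<le> (\<Sum>a\<in>R. F a)"
  proof -
    have "(\<Sum>a\<in>R. (u a)^2) \<le> (\<Sum>a\<in>R. F a)"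
    proof (rule sum_mono)
      fix a assume a: "a \<in> R"
      then have aA: "a \<in> A" by (simp add: R_def)
      have "M a a * u a * u a \<le> F a"
        unfolding F_def by (rule member_le_sum[OF aA]) (use Fn aA finA in auto)
      then show "(u a)^2 \<le> F a" using d aA by (simp add: power2_eq_square)
    qed
    then show ?thesis using cs1[OF finR, of u] by linarith
  qed
  define s' where "s' i = (if i < n then (\<Sum>a\<in>B i. u a) else (\<Sum>a\<in>R. u a))" for i
  define w' where "w' i = (if i < n then w i else real (card R))" for i
  have CS: "(\<Sum>i<Suc n. s' i)^2 / (\<Sum>i<Suc n. w' i) \<le> (\<Sum>i<Suc n. (s' i)^2 / w' i)"
  proof (rule wcs)
    show "\<forall>i\<in>{..<Suc n}. 0 \<le> w' i" using wp by (auto simp: w'_def less_imp_le)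
    show "\<forall>i\<in>{..<Suc n}. w' i = 0 \<longrightarrow> s' i = 0"
    proof
      fix i assume i: "i \<in> {..<Suc n}"
      show "w' i = 0 \<longrightarrow> s' i = 0"
      proof (cases "i < n")
        case True
        then have "w i > 0" using wp by blast
        then show ?thesis using True by (simp add: w'_def)
      next
        case False
        then show ?thesis using finR by (simp add: w'_def s'_def)
      qed
    qed
  qed simp
  have e1: "(\<Sum>i<Suc n. s' i) = 1"
  proof -
    have "(\<Sum>i<Suc n. s' i) = (\<Sum>i<n. s' i) + (\<Sum>a\<in>R. u a)" by (simp add: s'_def)
    also have "(\<Sum>i<n. s' i) = (\<Sum>i<n. \<Sum>a\<in>B i. u a)" by (rule sum.cong) (auto simp: s'_def)
    finally show ?thesis using split[of u] Uspl[of u] s1 by linarith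
  qed
  have e2: "(\<Sum>i<Suc n. w' i) = (\<Sum>i<n. w i) + real (card R)"
  proof -
    have "(\<Sum>i<Suc n. w' i) = (\<Sum>i<n. w' i) + real (card R)" by (simp add: w'_def)
    also have "(\<Sum>i<n. w' i) = (\<Sum>i<n. w i)" by (rule sum.cong) (auto simp: w'_def)
    finally show ?thesis .
  qed
  have e3: "(\<Sum>i<Suc n. (s' i)^2 / w' i) \<le> (\<Sum>a\<in>A. F a)"
  proof -
    have "(\<Sum>i<Suc n. (s' i)^2 / w' i) = (\<Sum>i<n. (s' i)^2 / w' i) + (\<Sum>a\<in>R. u a)^2 / real (card R)"
      by (simp add: s'_def w'_def)
    also have "(\<Sum>i<n. (s' i)^2 / w' i) = (\<Sum>i<n. (\<Sum>a\<in>B i. u a)^2 / w i)"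
      by (rule sum.cong) (auto simp: s'_def w'_def)
    also have "(\<Sum>i<n. (\<Sum>a\<in>B i. u a)^2 / w i) \<le> (\<Sum>i<n. \<Sum>a\<in>B i. F a)"
      by (rule sum_mono) (use blk in auto)
    finally show ?thesis using rst split[of F] Uspl[of F] by linarith
  qed
  show ?thesis using CS e1 e2 e3 by (simp add: F_def R_def U_def)
qed

lemma sym_sum:
  fixes W :: "nat \<Rightarrow> nat \<Rightarrow> real"
  assumes fin: "finite A" and sym: "\<forall>a\<in>A. \<forall>b\<in>A. W a b = W b a"
  shows "(\<Sum>a\<in>A. \<Sum>b\<in>A. W a b) = 2 * (\<Sum>a\<in>A. \<Sum>b\<in>A. if a < b then W a b else 0) + (\<Sum>a\<in>A. W a a)"
proof -
  have dec: "W a b = (if a < b then W a b else 0) + (if b < a then W a b else 0) + (if a = b then W a b else 0)" for a b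
    by auto
  have "(\<Sum>a\<in>A. \<Sum>b\<in>A. W a b) = (\<Sum>a\<in>A. \<Sum>b\<in>A. if a < b then W a b else 0)
      + (\<Sum>a\<in>A. \<Sum>b\<in>A. if b < a then W a b else 0) + (\<Sum>a\<in>A. \<Sum>b\<in>A. if a = b then W a b else 0)"
    by (subst dec) (simp only: sum.distrib)
  moreover have "(\<Sum>a\<in>A. \<Sum>b\<in>A. if a = b then W a b else 0) = (\<Sum>a\<in>A. W a a)"
    using fin by simp
  moreover have "(\<Sum>a\<in>A. \<Sum>b\<in>A. if b < a then W a b else 0) = (\<Sum>a\<in>A. \<Sum>b\<in>A. if a < b then W a b else 0)"
  proof -
    have "(\<Sum>a\<in>A. \<Sum>b\<in>A. if b < a then W a b else 0) = (\<Sum>b\<in>A. \<Sum>a\<in>A. if b < a then W a b else 0)"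
      by (rule sum.swap)
    also have "\<dots> = (\<Sum>b\<in>A. \<Sum>a\<in>A. if b < a then W b a else 0)"
      by (intro sum.cong refl) (use sym in auto)
    finally show ?thesis .
  qed
  ultimately show ?thesis by simp
qed

lemma quad_identity:
  fixes t :: nat and \<omega> :: "nat \<Rightarrow> nat \<Rightarrow> real" and u :: "nat \<Rightarrow> real"
  assumes sym: "\<forall>a\<in>{1..t}. \<forall>b\<in>{1..t}. a \<noteq> b \<longrightarrow> \<omega> a b = \<omega> b a"
    and s1: "(\<Sum>a\<in>{1..t}. u a) = 1"
  shows "(\<Sum>a\<in>{1..t}. \<Sum>b\<in>{1..t}. (if a = b then 1 else 1 - \<omega> a b) * u a * u b) = 1 - 2 * edge_poly t \<omega> u"
proof -
  define A where "A = {1..t}"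
  define W where "W a b = (if a = b then 0 else \<omega> a b * u a * u b)" for a b
  have fin: "finite A" by (simp add: A_def)
  have Ws: "\<forall>a\<in>A. \<forall>b\<in>A. W a b = W b a" using sym by (auto simp: W_def A_def)
  have t1: "(\<Sum>a\<in>A. \<Sum>b\<in>A. (if a = b then 1 else 1 - \<omega> a b) * u a * u b)
      = (\<Sum>a\<in>A. \<Sum>b\<in>A. u a * u b) - (\<Sum>a\<in>A. \<Sum>b\<in>A. W a b)"
  proof -
    have e: "(if a = b then 1 else 1 - \<omega> a b) * u a * u b = u a * u b - W a b" for a b
      by (cases "a = b") (simp_all add: W_def algebra_simps)
    show ?thesis by (simp only: e sum_subtractf)
  qed
  have t2: "(\<Sum>a\<in>A. \<Sum>b\<in>A. u a * u b) = 1"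
    using s1 by (simp add: A_def sum_product[symmetric])
  have t3: "(\<Sum>a\<in>A. \<Sum>b\<in>A. if a < b then W a b else 0) = edge_poly t \<omega> u"
    unfolding edge_poly_def A_def
  proof (rule sum.cong[OF refl])
    fix a assume a: "a \<in> {1..t}"
    have st: "{b \<in> {1..t}. a < b} = {a+1..t}" by auto
    have "(\<Sum>b\<in>{b \<in> {1..t}. a < b}. \<omega> a b * u a * u b) = (\<Sum>b\<in>{1..t}. if a < b then \<omega> a b * u a * u b else 0)"
      by (rule sum.inter_filter) simp
    then have "(\<Sum>b\<in>{a+1..t}. \<omega> a b * u a * u b) = (\<Sum>b\<in>{1..t}. if a < b then \<omega> a b * u a * u b else 0)"
      by (simp only: st)
    moreover have "(\<Sum>b\<in>{1..t}. if a < b then W a b else 0) = (\<Sum>b\<in>{1..t}. if a < b then \<omega> a b * u a * u b else 0)"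
      by (rule sum.cong) (auto simp: W_def)
    ultimately show "(\<Sum>b\<in>{1..t}. if a < b then W a b else 0) = (\<Sum>b\<in>{a+1..t}. \<omega> a b * u a * u b)"
      by simp
  qed
  have t4: "(\<Sum>a\<in>A. W a a) = 0" by (simp add: W_def)
  show ?thesis using t1 t2 t3 t4 sym_sum[OF fin Ws] by (simp add: A_def)
qed


definition Mw :: "(nat \<Rightarrow> nat \<Rightarrow> real) \<Rightarrow> nat \<Rightarrow> nat \<Rightarrow> real" where
  "Mw \<omega> a b = (if a = b then 1 else 1 - \<omega> a b)"

definition good_block :: "nat \<Rightarrow> (nat \<Rightarrow> nat \<Rightarrow> real) \<Rightarrow> nat set \<times> real \<Rightarrow> bool" where
  "good_block t \<omega> p \<longleftrightarrow> fst p \<subseteq> {1..t} \<and> snd p > 0 \<and>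
     (\<forall>u. (\<forall>a\<in>{1..t}. 0 \<le> u a) \<longrightarrow>
        (\<Sum>a\<in>fst p. u a)^2 / snd p \<le> (\<Sum>a\<in>fst p. \<Sum>b\<in>fst p. Mw \<omega> a b * u a * u b))"

lemma Mw_nn:
  assumes wc: "weighted_complete t \<omega>" and a: "a \<in> {1..t}" and b: "b \<in> {1..t}"
  shows "0 \<le> Mw \<omega> a b"
proof (cases "a = b")
  case True then show ?thesis by (simp add: Mw_def)
next
  case False
  then have "\<omega> a b \<in> {1/2, 1}" using wc a b unfolding weighted_complete_def by blast
  then show ?thesis using False by (auto simp: Mw_def)
qed

lemma cycle_block:
  assumes wc: "weighted_complete t \<omega>" and hc: "half_cycle t \<omega> k c" and k3: "k \<ge> 3"
  shows "good_block t \<omega> (set c, real k / 2)"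
proof -
  have len: "length c = k" and dist: "distinct c" and sub: "set c \<subseteq> {1..t}"
    and he: "\<forall>i<k. half_edge \<omega> (c ! i) (c ! ((i + 1) mod k))"
    using hc unfolding half_cycle_def by auto
  have sym: "\<forall>a\<in>set c. \<forall>b\<in>set c. Mw \<omega> a b = Mw \<omega> b a"
  proof (intro ballI)
    fix a b assume a: "a \<in> set c" and b: "b \<in> set c"
    show "Mw \<omega> a b = Mw \<omega> b a"
    proof (cases "a = b")
      case True then show ?thesis by simp
    next
      case False
      then have "\<omega> a b = \<omega> b a" using wc a b sub unfolding weighted_complete_def by blast
      then show ?thesis by (simp add: Mw_def)
    qed
  qed
  have h: "\<forall>m<k. Mw \<omega> (c!m) (c!((m+1) mod k)) = 1/2"
  proof (intro allI impI)
    fix m assume m: "m < k"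
    have ne: "m \<noteq> (m+1) mod k"
    proof (cases "m + 1 = k")
      case True then show ?thesis using k3 by simp
    next
      case False then show ?thesis using m by simp
    qed
    have ml: "(m+1) mod k < k" using k3 by simp
    have "c!m \<noteq> c!((m+1) mod k)" using ne m ml dist len by (simp add: nth_eq_iff_index_eq)
    moreover have "\<omega> (c!m) (c!((m+1) mod k)) = 1/2" using he m by (simp add: half_edge_def)
    ultimately show "Mw \<omega> (c!m) (c!((m+1) mod k)) = 1/2" by (simp add: Mw_def)
  qed
  show ?thesis
    unfolding good_block_def
  proof (intro conjI allI impI)
    show "fst (set c, real k / 2) \<subseteq> {1..t}" using sub by simp
    show "snd (set c, real k / 2) > 0" using k3 by simp
    fix u :: "nat \<Rightarrow> real" assume un: "\<forall>a\<in>{1..t}. 0 \<le> u a"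
    have nn: "\<forall>a\<in>set c. \<forall>b\<in>set c. 0 \<le> Mw \<omega> a b * u a * u b"
      using Mw_nn[OF wc] un sub by (meson mult_nonneg_nonneg subsetD)
    show "(\<Sum>a\<in>fst (set c, real k / 2). u a)^2 / snd (set c, real k / 2)
        \<le> (\<Sum>a\<in>fst (set c, real k / 2). \<Sum>b\<in>fst (set c, real k / 2). Mw \<omega> a b * u a * u b)"
      using cycle_bound[OF dist len k3 _ sym h nn] by (simp add: Mw_def)
  qed
qed

lemma clique_block:
  assumes wc: "weighted_complete t \<omega>" and hc: "half_clique t \<omega> k S" and k1: "k \<ge> 1"
  shows "good_block t \<omega> (S, 2 * real k / (real k + 1))"
proof -
  have ck: "card S = k" and sub: "S \<subseteq> {1..t}" and he: "\<forall>i\<in>S. \<forall>j\<in>S. i \<noteq> j \<longrightarrow> half_edge \<omega> i j"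
    using hc unfolding half_clique_def by auto
  have fin: "finite S" using sub finite_subset by blast
  have h: "\<forall>a\<in>S. \<forall>b\<in>S. a \<noteq> b \<longrightarrow> Mw \<omega> a b = 1/2"
    using he by (simp add: half_edge_def Mw_def)
  show ?thesis
    unfolding good_block_def
  proof (intro conjI allI impI)
    show "fst (S, 2 * real k / (real k + 1)) \<subseteq> {1..t}" using sub by simp
    show "snd (S, 2 * real k / (real k + 1)) > 0" using k1 by simp
    fix u :: "nat \<Rightarrow> real"
    show "(\<Sum>a\<in>fst (S, 2 * real k / (real k + 1)). u a)^2 / snd (S, 2 * real k / (real k + 1))
        \<le> (\<Sum>a\<in>fst (S, 2 * real k / (real k + 1)). \<Sum>b\<in>fst (S, 2 * real k / (real k + 1)). Mw \<omega> a b * u a * u b)"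
      using clique_bound[OF fin ck k1 _ h, of u] by (simp add: Mw_def)
  qed
qed

lemma sum_nth_list: "(\<Sum>i<length xs. f (xs!i)) = sum_list (map f xs)"
  by (simp add: sum_list_sum_nth atLeast0LessThan)

lemma sum_list_const_on:
  assumes "\<forall>x\<in>set xs. f x = r"
  shows "sum_list (map f xs) = real (length xs) * (r :: real)"
  using assms by (induct xs) (auto simp: algebra_simps)

theorem mainTheorem7:
  fixes t :: nat and \<omega> :: "nat \<Rightarrow> nat \<Rightarrow> real"
    and C8s C5s C4s :: "nat list list"
    and K5s K4s K3s Es :: "nat set list"
  assumes "t \<ge> 1"
    and "weighted_complete t \<omega>"
    and "\<forall>c\<in>set C8s. half_cycle t \<omega> 8 c"
    and "\<forall>S\<in>set K5s. half_clique t \<omega> 5 S"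
    and "\<forall>c\<in>set C5s. half_cycle t \<omega> 5 c"
    and "\<forall>S\<in>set K4s. half_clique t \<omega> 4 S"
    and "\<forall>c\<in>set C4s. half_cycle t \<omega> 4 c"
    and "\<forall>S\<in>set K3s. half_clique t \<omega> 3 S"
    and "\<forall>S\<in>set Es. half_clique t \<omega> 2 S"
    and "let V = map set C8s @ K5s @ map set C5s @ K4s @ map set C4s @ K3s @ Es in
           \<forall>i<length V. \<forall>j<length V. i \<noteq> j \<longrightarrow> V ! i \<inter> V ! j = {}"
  shows "2 * edge_density t \<omega> \<le> 1 - 30 / (30 * real t - 120 * real (length C8s)
           - 100 * real (length K5s) - 75 * real (length C5s) - 72 * real (length K4s)
           - 60 * real (length C4s) - 45 * real (length K3s) - 20 * real (length Es))"
proof -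
  note wc = assms(2)
  define A where "A = {1..t}"
  define D where "D = 30 * real t - 120 * real (length C8s)
           - 100 * real (length K5s) - 75 * real (length C5s) - 72 * real (length K4s)
           - 60 * real (length C4s) - 45 * real (length K3s) - 20 * real (length Es)"
  define BL :: "(nat set \<times> real) list" where "BL =
     map (\<lambda>c. (set c, real 8 / 2)) C8s @ map (\<lambda>S. (S, 2 * real 5 / (real 5 + 1))) K5s @
     map (\<lambda>c. (set c, real 5 / 2)) C5s @ map (\<lambda>S. (S, 2 * real 4 / (real 4 + 1))) K4s @
     map (\<lambda>c. (set c, real 4 / 2)) C4s @ map (\<lambda>S. (S, 2 * real 3 / (real 3 + 1))) K3s @
     map (\<lambda>S. (S, 2 * real 2 / (real 2 + 1))) Es"
  define n where "n = length BL"
  define B where "B i = fst (BL ! i)" for i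
  define w where "w i = snd (BL ! i)" for i
  have V: "map fst BL = map set C8s @ K5s @ map set C5s @ K4s @ map set C4s @ K3s @ Es"
    by (simp add: BL_def comp_def)
  have disj: "\<forall>i<n. \<forall>j<n. i \<noteq> j \<longrightarrow> B i \<inter> B j = {}"
  proof (intro allI impI)
    fix i j assume i: "i < n" and j: "j < n" and ij: "i \<noteq> j"
    have "(map fst BL) ! i \<inter> (map fst BL) ! j = {}"
      using assms(10) i j ij unfolding V[symmetric] Let_def n_def by simp
    then show "B i \<inter> B j = {}" using i j by (simp add: B_def n_def)
  qed
  have good: "\<forall>p\<in>set BL. good_block t \<omega> p"
  proof -
    have c8: "\<forall>c\<in>set C8s. good_block t \<omega> (set c, real 8 / 2)"
      by (intro ballI cycle_block[OF wc]) (use assms(3) in auto)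
    have c5: "\<forall>c\<in>set C5s. good_block t \<omega> (set c, real 5 / 2)"
      by (intro ballI cycle_block[OF wc]) (use assms(5) in auto)
    have c4: "\<forall>c\<in>set C4s. good_block t \<omega> (set c, real 4 / 2)"
      by (intro ballI cycle_block[OF wc]) (use assms(7) in auto)
    have k5: "\<forall>S\<in>set K5s. good_block t \<omega> (S, 2 * real 5 / (real 5 + 1))"
      by (intro ballI clique_block[OF wc]) (use assms(4) in auto)
    have k4: "\<forall>S\<in>set K4s. good_block t \<omega> (S, 2 * real 4 / (real 4 + 1))"
      by (intro ballI clique_block[OF wc]) (use assms(6) in auto)
    have k3: "\<forall>S\<in>set K3s. good_block t \<omega> (S, 2 * real 3 / (real 3 + 1))"
      by (intro ballI clique_block[OF wc]) (use assms(8) in auto)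
    have e2: "\<forall>S\<in>set Es. good_block t \<omega> (S, 2 * real 2 / (real 2 + 1))"
      by (intro ballI clique_block[OF wc]) (use assms(9) in auto)
    show ?thesis unfolding BL_def using c8 c5 c4 k5 k4 k3 e2 by auto
  qed
  have Wsum: "(\<Sum>i<n. w i) = 4 * real (length C8s) + 5/3 * real (length K5s) + 5/2 * real (length C5s)
      + 8/5 * real (length K4s) + 2 * real (length C4s) + 3/2 * real (length K3s) + 4/3 * real (length Es)"
  proof -
    have "(\<Sum>i<n. w i) = sum_list (map snd BL)" unfolding n_def w_def by (rule sum_nth_list)
    also have "\<dots> = 4 * real (length C8s) + 5/3 * real (length K5s) + 5/2 * real (length C5s)
      + 8/5 * real (length K4s) + 2 * real (length C4s) + 3/2 * real (length K3s) + 4/3 * real (length Es)"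
      by (simp add: BL_def comp_def sum_list_triv)
    finally show ?thesis .
  qed
  have finB: "\<forall>i\<in>{..<n}. finite (B i)"
    using good unfolding good_block_def B_def n_def
    by (meson finite_atLeastAtMost finite_subset lessThan_iff nth_mem)
  have disj': "\<forall>i\<in>{..<n}. \<forall>j\<in>{..<n}. i \<noteq> j \<longrightarrow> B i \<inter> B j = {}" using disj by auto
  have cardU: "real (card (\<Union>i<n. B i)) = 8 * real (length C8s) + 5 * real (length K5s) + 5 * real (length C5s)
      + 4 * real (length K4s) + 4 * real (length C4s) + 3 * real (length K3s) + 2 * real (length Es)"
  proof -
    have "card (\<Union>i<n. B i) = (\<Sum>i<n. card (B i))"
      by (rule card_UN_disjoint[OF _ finB disj']) simp
    then have "real (card (\<Union>i<n. B i)) = (\<Sum>i<n. real (card (fst (BL ! i))))"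
      by (simp add: B_def)
    also have "\<dots> = sum_list (map (\<lambda>p. real (card (fst p))) BL)" unfolding n_def by (rule sum_nth_list)
    also have "\<dots> = sum_list (map (\<lambda>c. real (card (set c))) C8s) + sum_list (map (\<lambda>S. real (card S)) K5s)
       + sum_list (map (\<lambda>c. real (card (set c))) C5s) + sum_list (map (\<lambda>S. real (card S)) K4s)
       + sum_list (map (\<lambda>c. real (card (set c))) C4s) + sum_list (map (\<lambda>S. real (card S)) K3s)
       + sum_list (map (\<lambda>S. real (card S)) Es)"
      by (simp add: BL_def comp_def)
    also have "\<dots> = 8 * real (length C8s) + 5 * real (length K5s) + 5 * real (length C5s)
      + 4 * real (length K4s) + 4 * real (length C4s) + 3 * real (length K3s) + 2 * real (length Es)"
    proof -
      have a: "sum_list (map (\<lambda>c. real (card (set c))) C8s) = real (length C8s) * 8"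
        by (rule sum_list_const_on) (use assms(3) in \<open>auto simp: half_cycle_def distinct_card\<close>)
      have b: "sum_list (map (\<lambda>c. real (card (set c))) C5s) = real (length C5s) * 5"
        by (rule sum_list_const_on) (use assms(5) in \<open>auto simp: half_cycle_def distinct_card\<close>)
      have c: "sum_list (map (\<lambda>c. real (card (set c))) C4s) = real (length C4s) * 4"
        by (rule sum_list_const_on) (use assms(7) in \<open>auto simp: half_cycle_def distinct_card\<close>)
      have d: "sum_list (map (\<lambda>S. real (card S)) K5s) = real (length K5s) * 5"
        by (rule sum_list_const_on) (use assms(4) in \<open>auto simp: half_clique_def\<close>)
      have e: "sum_list (map (\<lambda>S. real (card S)) K4s) = real (length K4s) * 4"
        by (rule sum_list_const_on) (use assms(6) in \<open>auto simp: half_clique_def\<close>)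
      have f: "sum_list (map (\<lambda>S. real (card S)) K3s) = real (length K3s) * 3"
        by (rule sum_list_const_on) (use assms(8) in \<open>auto simp: half_clique_def\<close>)
      have g: "sum_list (map (\<lambda>S. real (card S)) Es) = real (length Es) * 2"
        by (rule sum_list_const_on) (use assms(9) in \<open>auto simp: half_clique_def\<close>)
      show ?thesis using a b c d e f g by simp
    qed
    finally show ?thesis .
  qed
  have UA: "(\<Union>i<n. B i) \<subseteq> A"
    using good unfolding good_block_def B_def n_def A_def by (auto simp: nth_mem)
  have cardR: "real (card (A - (\<Union>i<n. B i))) = real t - real (card (\<Union>i<n. B i))"
  proof -
    have fU: "finite (\<Union>i<n. B i)" using finB by auto
    have "card (A - (\<Union>i<n. B i)) = card A - card (\<Union>i<n. B i)" by (rule card_Diff_subset[OF fU UA])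
    moreover have "card (\<Union>i<n. B i) \<le> card A" using card_mono[OF _ UA] by (simp add: A_def)
    ultimately show ?thesis by (simp add: A_def of_nat_diff)
  qed
  have Wr: "(\<Sum>i<n. w i) + real (card (A - (\<Union>i<n. B i))) = D / 30"
    using Wsum cardR cardU by (simp add: D_def field_simps)
  have bound: "2 * edge_poly t \<omega> u \<le> 1 - 30 / D" if u: "u \<in> simplex t" for u
  proof -
    have un: "\<forall>a\<in>A. 0 \<le> u a" and s1: "(\<Sum>a\<in>A. u a) = 1" using u by (auto simp: simplex_def A_def)
    have main: "1 / ((\<Sum>i<n. w i) + real (card (A - (\<Union>i<n. B i)))) \<le> (\<Sum>a\<in>A. \<Sum>b\<in>A. Mw \<omega> a b * u a * u b)"
    proof (rule block_main)
      show "finite A" by (simp add: A_def)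
      show "\<forall>i<n. B i \<subseteq> A" using UA by auto
      show "\<forall>i<n. \<forall>j<n. i \<noteq> j \<longrightarrow> B i \<inter> B j = {}" by (rule disj)
      show "\<forall>i<n. 0 < w i" using good unfolding good_block_def w_def n_def by (auto simp: nth_mem)
      show "\<forall>i<n. (\<Sum>a\<in>B i. u a)^2 / w i \<le> (\<Sum>a\<in>B i. \<Sum>b\<in>B i. Mw \<omega> a b * u a * u b)"
        using good un unfolding good_block_def w_def B_def n_def A_def by (auto simp: nth_mem)
      show "\<forall>a\<in>A. \<forall>b\<in>A. 0 \<le> Mw \<omega> a b * u a * u b"
        using Mw_nn[OF wc] un unfolding A_def by (simp add: mult_nonneg_nonneg)
      show "\<forall>a\<in>A. Mw \<omega> a a = 1" by (simp add: Mw_def)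
      show "(\<Sum>a\<in>A. u a) = 1" by (rule s1)
    qed
    have symw: "\<forall>a\<in>{1..t}. \<forall>b\<in>{1..t}. a \<noteq> b \<longrightarrow> \<omega> a b = \<omega> b a"
      using wc unfolding weighted_complete_def by blast
    have q: "(\<Sum>a\<in>A. \<Sum>b\<in>A. Mw \<omega> a b * u a * u b) = 1 - 2 * edge_poly t \<omega> u"
      using quad_identity[OF symw s1[unfolded A_def]] by (simp add: Mw_def A_def)
    have "30 / D = 1 / (D / 30)" by simp
    then show ?thesis using main q Wr by simp
  qed
  have ne: "simplex t \<noteq> {}"
  proof -
    have "(\<lambda>i. if i = 1 then 1 else 0 :: real) \<in> simplex t"
      using assms(1) by (simp add: simplex_def)
    then show ?thesis by blast
  qed
  have "edge_density t \<omega> \<le> (1 - 30 / D) / 2"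
    unfolding edge_density_def
  proof (rule cSup_least)
    show "edge_poly t \<omega> ` simplex t \<noteq> {}" using ne by simp
    fix x assume "x \<in> edge_poly t \<omega> ` simplex t"
    then obtain u where u: "u \<in> simplex t" and x: "x = edge_poly t \<omega> u" by blast
    have half: "\<And>a b :: real. 2 * a \<le> b \<Longrightarrow> a \<le> b / 2" by simp
    show "x \<le> (1 - 30 / D) / 2" using half[OF bound[OF u]] x by simp
  qed
  then show ?thesis by (simp add: D_def)
qed

end
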